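(* Let $0<a\le 1$, $b=2-a$, $\tfrac12<c_1<1$, and let $(k_a(t),k_b(t))$ be the Markov chain $K$ described in the context, started from any state with $k_a+k_b\ge 2c_1 n$. Let $\tau_a$ be the first time with $k_a=n$. Then there is a constant $C$ depending only on $a,c_1$ such that $$\mathbb{E}\,\tau_a\le \frac{n}{a(2c_1-1)}\log\big((2c_1-1)n\big)+Cn .$$
   Context: The chain $K$ (it records the numbers $k_a,k_b$ of marked $a$-cards and marked $b$-cards in the second marking phase of a biased transposition shuffle of $N=2n$ cards, $n$ of each type). Its states are pairs $(k_a,k_b)$ of integers with $0\le k_a,k_b\le n$ and $k_a+k_b\ge n$. From $(k_a,k_b)$ it moves to $(k_a,k_b+1)$ with probability $\frac{2ab(n-k_b)(k_a+k_b+1)}{(2n)^2}$; to $(k_a+1,k_b)$ with probability $\frac{2a^2(n-k_a)(k_a+k_b+1)}{(2n)^2}$; to $(k_a+1,k_b-1)$ with probability $\frac{2a(b-a)(n-k_a)k_b}{(2n)^2}$; and otherwise stays put. *)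

theory Defs
  imports "HOL-Analysis.Analysis"
begin

definition pK_up_b :: "real \<Rightarrow> nat \<Rightarrow> nat \<Rightarrow> nat \<Rightarrow> real" where
  "pK_up_b a n ka kb = 2 * a * (2 - a) * (real n - real kb) * (real ka + real kb + 1) / (2 * real n)^2"

definition pK_up_a :: "real \<Rightarrow> nat \<Rightarrow> nat \<Rightarrow> nat \<Rightarrow> real" where
  "pK_up_a a n ka kb = 2 * a^2 * (real n - real ka) * (real ka + real kb + 1) / (2 * real n)^2"

definition pK_swap :: "real \<Rightarrow> nat \<Rightarrow> nat \<Rightarrow> nat \<Rightarrow> real" where
  "pK_swap a n ka kb = 2 * a * ((2 - a) - a) * (real n - real ka) * real kb / (2 * real n)^2"

text \<open>K_surv a n t (ka,kb) = probability, for the chain started at (ka,kb),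
  that k_a \<noteq> n at all times 0,...,t, i.e. P(tau_a > t).\<close>

fun K_surv :: "real \<Rightarrow> nat \<Rightarrow> nat \<Rightarrow> nat \<times> nat \<Rightarrow> real" where
  "K_surv a n 0 (ka, kb) = (if ka = n then 0 else 1)"
| "K_surv a n (Suc t) (ka, kb) =
     (if ka = n then 0 else
        pK_up_b a n ka kb * K_surv a n t (ka, kb + 1)
      + pK_up_a a n ka kb * K_surv a n t (ka + 1, kb)
      + pK_swap a n ka kb * K_surv a n t (ka + 1, kb - 1)
      + (1 - pK_up_b a n ka kb - pK_up_a a n ka kb - pK_swap a n ka kb) * K_surv a n t (ka, kb))"

text \<open>Expected hitting time E tau_a = sum over t of P(tau_a > t) (possibly infinite).\<close>

definition K_expected_tau_a :: "real \<Rightarrow> nat \<Rightarrow> nat \<times> nat \<Rightarrow> ennreal" where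
  "K_expected_tau_a a n s = (\<Sum>t. ennreal (K_surv a n t s))"

end

theory Submission
  imports Defs
begin

definition Hs :: "nat \<Rightarrow> real" where "Hs m = (\<Sum>j=1..m. 1 / real j)"

lemma Hs_Suc: "Hs (Suc m) = Hs m + 1 / real (Suc m)"
  by (simp add: Hs_def)

lemma Hs_nonneg: "Hs m \<ge> 0"
  unfolding Hs_def by (intro sum_nonneg) auto

lemma Hs_le: "m \<ge> 1 \<Longrightarrow> Hs m \<le> 1 + ln (real m)"
proof (induction m rule: dec_induct)
  case base then show ?case by (simp add: Hs_def)
next
  case (step m)
  have m: "real m \<ge> 1" using step by simp
  have "ln (real m / real (Suc m)) \<le> real m / real (Suc m) - 1"
    using m by (intro ln_le_minus_one) auto
  also have "\<dots> = - 1 / real (Suc m)" using m by (simp add: field_simps)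
  finally have "1 / real (Suc m) \<le> ln (real (Suc m)) - ln (real m)"
    using m by (simp add: ln_div)
  then show ?case using step Hs_Suc[of m] by simp
qed

lemma Hs_mono: "m \<le> n \<Longrightarrow> Hs m \<le> Hs n"
  unfolding Hs_def by (intro sum_mono2) auto

lemma probs:
  fixes a c1 :: real and n ka kb :: nat
  assumes a: "0 < a" "a \<le> 1" and c: "1/2 < c1" "c1 < 1" and n: "n \<ge> 1"
    and S: "ka \<le> n" "kb \<le> n" "2*c1*real n \<le> real ka + real kb" and lt: "ka < n"
  shows "pK_up_b a n ka kb \<ge> 0" "pK_up_a a n ka kb \<ge> 0" "pK_swap a n ka kb \<ge> 0"
    "pK_up_b a n ka kb + pK_up_a a n ka kb + pK_swap a n ka kb \<le> 1"
    "pK_up_a a n ka kb + pK_swap a n ka kb \<ge> a * (a + (2-a)*(2*c1-1)) * (real n - real ka) / (2 * real n)"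
proof -
  have nn: "real n \<ge> 1" using n by simp
  have N: "(2 * real n)^2 > 0" using nn by simp
  have x: "real n - real ka \<ge> 0" and y: "real n - real kb \<ge> 0" using S by auto
  show "pK_up_b a n ka kb \<ge> 0" unfolding pK_up_b_def using a x y by (intro divide_nonneg_pos N) simp
  show "pK_up_a a n ka kb \<ge> 0" unfolding pK_up_a_def using a x y by (intro divide_nonneg_pos N) simp
  show "pK_swap a n ka kb \<ge> 0" unfolding pK_swap_def using a x y by (intro divide_nonneg_pos N) simp
  define X where "X = real n - real ka"
  define Y where "Y = real n - real kb"
  define K where "K = real ka + real kb"
  have X0: "X \<ge> 0" "Y \<ge> 0" using x y X_def Y_def by auto
  have "real n \<le> 2*c1*real n" using mult_right_mono[of 1 "2*c1" "real n"] c by simp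
  then have Kge: "K \<ge> real n" using S unfolding K_def by linarith
  have kbK: "real kb \<le> K + 1" unfolding K_def by simp
  have T1: "a * X * (K+1) + (2 - 2*a) * X * real kb \<le> (2-a) * X * (K+1)"
  proof -
    have "(2 - 2*a) * X * real kb \<le> (2 - 2*a) * X * (K+1)"
      using a X0 kbK by (intro mult_left_mono) auto
    then show ?thesis by (simp add: algebra_simps)
  qed
  have s: "X + Y = 2 * real n - K" unfolding X_def Y_def K_def by simp
  have ab: "a * (2 - a) \<le> 1"
  proof -
    have "(a-1)*(a-1) \<ge> 0" by simp
    then show ?thesis by (simp add: algebra_simps)
  qed
  have sq: "(X+Y) * (K+1) \<le> real n * (real n + 1)"
  proof -
    have q1: "real n * (real n + 1) - (X+Y)*(K+1) = (real n - (X+Y)) * (real n + 1 - (X+Y))"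
    proof -
      have Kd: "K = 2*real n - (X+Y)" using s by simp
      show ?thesis unfolding Kd by (simp add: algebra_simps)
    qed
    have q2: "real n - (X+Y) \<ge> 0" using s Kge by simp
    have q3: "real n + 1 - (X+Y) \<ge> 0" using s Kge by simp
    have "(real n - (X+Y)) * (real n + 1 - (X+Y)) \<ge> 0" using q2 q3 by (rule mult_nonneg_nonneg)
    then show ?thesis using q1 by linarith
  qed
  have tot: "2 * a * ((2-a) * Y * (K+1) + a * X * (K+1) + (2 - 2*a) * X * real kb) \<le> 4 * real n ^ 2"
  proof -
    have "2 * a * ((2-a) * Y * (K+1) + a * X * (K+1) + (2 - 2*a) * X * real kb)
        \<le> 2 * a * ((2-a) * Y * (K+1) + (2-a) * X * (K+1))"
      using T1 a by (intro mult_left_mono) auto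
    also have "\<dots> = 2 * (a * (2-a)) * ((X+Y)*(K+1))" by (simp add: algebra_simps)
    also have "\<dots> \<le> 2 * 1 * (real n * (real n + 1))"
    proof -
      have nn0: "(X+Y)*(K+1) \<ge> 0" using X0 Kge nn by (intro mult_nonneg_nonneg) auto
      have "(a * (2-a)) * ((X+Y)*(K+1)) \<le> 1 * ((X+Y)*(K+1))" using ab nn0 by (rule mult_right_mono)
      then show ?thesis using sq by linarith
    qed
    also have "\<dots> \<le> 4 * real n ^ 2" using nn by (simp add: power2_eq_square algebra_simps)
    finally show ?thesis .
  qed
  have eq: "pK_up_b a n ka kb + pK_up_a a n ka kb + pK_swap a n ka kb
     = 2 * a * ((2-a) * Y * (K+1) + a * X * (K+1) + (2 - 2*a) * X * real kb) / (4 * real n ^ 2)"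
  proof -
    have num: "2 * a * (2 - a) * (real n - real kb) * (real ka + real kb + 1)
        + 2 * a^2 * (real n - real ka) * (real ka + real kb + 1)
        + 2 * a * ((2 - a) - a) * (real n - real ka) * real kb
        = 2 * a * ((2-a) * Y * (K+1) + a * X * (K+1) + (2 - 2*a) * X * real kb)"
      unfolding X_def Y_def K_def by (simp add: algebra_simps power2_eq_square)
    have d: "(2 * real n)^2 = 4 * real n ^ 2" by (simp add: power2_eq_square)
    show ?thesis unfolding pK_up_b_def pK_up_a_def pK_swap_def add_divide_distrib[symmetric] num d ..
  qed
  show "pK_up_b a n ka kb + pK_up_a a n ka kb + pK_swap a n ka kb \<le> 1"
    unfolding eq using tot nn by (simp add: divide_le_eq)
  define e where "e = 2*c1 - 1"
  have e: "e > 0" "e < 1" using c e_def by auto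
  have kbge: "real kb \<ge> (1+e) * real n - real ka" using S e_def by (simp add: algebra_simps)
  have rate: "a * (K+1) + (2 - 2*a) * real kb \<ge> (a + (2-a)*e) * real n"
  proof -
    have "a * (K+1) + (2 - 2*a) * real kb \<ge> a * real ka + (2-a) * real kb"
      unfolding K_def using a by (simp add: algebra_simps)
    moreover have "(2-a) * real kb \<ge> (2-a) * ((1+e) * real n - real ka)"
      using kbge a by (intro mult_left_mono) auto
    moreover have "(2 - 2*a) * real ka \<le> (2 - 2*a) * real n" using S a by (intro mult_left_mono) auto
    ultimately show ?thesis by (simp add: algebra_simps)
  qed
  have eq2: "pK_up_a a n ka kb + pK_swap a n ka kb = 2 * a * X * (a * (K+1) + (2 - 2*a) * real kb) / (4 * real n ^ 2)"
  proof -
    have num: "2 * a^2 * (real n - real ka) * (real ka + real kb + 1)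
        + 2 * a * ((2 - a) - a) * (real n - real ka) * real kb
        = 2 * a * X * (a * (K+1) + (2 - 2*a) * real kb)"
      unfolding X_def K_def by (simp add: algebra_simps power2_eq_square)
    have d: "(2 * real n)^2 = 4 * real n ^ 2" by (simp add: power2_eq_square)
    show ?thesis unfolding pK_up_a_def pK_swap_def add_divide_distrib[symmetric] num d ..
  qed
  have "2 * a * X * ((a + (2-a)*e) * real n) \<le> 2 * a * X * (a * (K+1) + (2 - 2*a) * real kb)"
    using rate a X0 by (intro mult_left_mono) auto
  then have "2 * a * X * ((a + (2-a)*e) * real n) / (4 * real n ^ 2) \<le> pK_up_a a n ka kb + pK_swap a n ka kb"
    unfolding eq2 using nn by (intro divide_right_mono) auto
  moreover have "2 * a * X * ((a + (2-a)*e) * real n) / (4 * real n ^ 2) = a * (a + (2-a)*(2*c1-1)) * (real n - real ka) / (2 * real n)"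
    unfolding X_def e_def using nn by (simp add: field_simps power2_eq_square)
  ultimately show "pK_up_a a n ka kb + pK_swap a n ka kb \<ge> a * (a + (2-a)*(2*c1-1)) * (real n - real ka) / (2 * real n)"
    by simp
qed


definition inS :: "real \<Rightarrow> nat \<Rightarrow> nat \<Rightarrow> nat \<Rightarrow> bool" where
  "inS c1 n ka kb \<longleftrightarrow> ka \<le> n \<and> kb \<le> n \<and> 2*c1*real n \<le> real ka + real kb"

definition Vf :: "real \<Rightarrow> real \<Rightarrow> nat \<Rightarrow> nat \<Rightarrow> real" where
  "Vf a c1 n ka = 2 * real n / (a * (a + (2-a)*(2*c1-1))) * Hs (n - ka)"

lemma kb_pos:
  assumes "1/2 < c1" "n \<ge> 1" "inS c1 n ka kb" shows "kb \<ge> 1"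
proof -
  have "real n < 2*c1*real n" using assms(1,2) mult_strict_right_mono[of 1 "2*c1" "real n"] by simp
  then show ?thesis using assms(3) unfolding inS_def by (cases kb) auto
qed

lemma surv_nonneg:
  assumes a: "0 < a" "a \<le> 1" and c: "1/2 < c1" "c1 < 1" and n: "n \<ge> 1"
  shows "inS c1 n ka kb \<Longrightarrow> K_surv a n t (ka, kb) \<ge> 0"
proof (induction t arbitrary: ka kb)
  case 0 then show ?case by simp
next
  case (Suc t)
  show ?case
  proof (cases "ka = n")
    case True then show ?thesis by simp
  next
    case False
    then have lt: "ka < n" using Suc.prems unfolding inS_def by auto
    note P = probs[OF a c n _ _ _ lt] 
    have S: "ka \<le> n" "kb \<le> n" "2*c1*real n \<le> real ka + real kb" using Suc.prems unfolding inS_def by auto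
    have kb1: "kb \<ge> 1" using kb_pos[OF c(1) n Suc.prems] .
    have t1: "pK_up_b a n ka kb * K_surv a n t (ka, kb + 1) \<ge> 0"
    proof (cases "kb = n")
      case True then show ?thesis by (simp add: pK_up_b_def)
    next
      case False
      then have "inS c1 n ka (kb+1)" using S unfolding inS_def by auto
      then show ?thesis using Suc.IH P(1)[OF S] by simp
    qed
    have "inS c1 n (ka+1) kb" using S lt unfolding inS_def by auto
    then have t2: "pK_up_a a n ka kb * K_surv a n t (ka + 1, kb) \<ge> 0" using Suc.IH P(2)[OF S] by simp
    have "inS c1 n (ka+1) (kb-1)" using S lt kb1 unfolding inS_def by (auto simp: of_nat_diff)
    then have t3: "pK_swap a n ka kb * K_surv a n t (ka + 1, kb - 1) \<ge> 0" using Suc.IH P(3)[OF S] by simp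
    have t4: "(1 - pK_up_b a n ka kb - pK_up_a a n ka kb - pK_swap a n ka kb) * K_surv a n t (ka, kb) \<ge> 0"
      using Suc.IH[OF Suc.prems] P(4)[OF S] by simp
    show ?thesis using False t1 t2 t3 t4 by simp
  qed
qed

lemma Vf_nonneg:
  assumes a: "0 < a" "a \<le> 1" and c: "1/2 < c1" "c1 < 1"
  shows "Vf a c1 n ka \<ge> 0"
proof -
  have "(2-a)*(2*c1-1) > 0" using a c by (intro mult_pos_pos) auto
  then have "a + (2-a)*(2*c1-1) > 0" using a by simp
  then show ?thesis unfolding Vf_def using a Hs_nonneg by simp
qed

lemma partial_bound:
  assumes a: "0 < a" "a \<le> 1" and c: "1/2 < c1" "c1 < 1" and n: "n \<ge> 1"
  shows "inS c1 n ka kb \<Longrightarrow> (\<Sum>u<t. K_surv a n u (ka, kb)) \<le> Vf a c1 n ka"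
proof (induction t arbitrary: ka kb)
  case 0 then show ?case using Vf_nonneg[OF a c] by simp
next
  case (Suc t)
  define A where "A = (\<lambda>p. \<Sum>u<t. K_surv a n u p)"
  show ?case
  proof (cases "ka = n")
    case True
    have z: "K_surv a n u (ka, kb) = 0" for u using True by (cases u) simp_all
    have "(\<Sum>u<Suc t. K_surv a n u (ka, kb)) = 0" by (simp add: z)
    then show ?thesis using Vf_nonneg[OF a c] by simp
  next
    case False
    then have lt: "ka < n" using Suc.prems unfolding inS_def by auto
    have S: "ka \<le> n" "kb \<le> n" "2*c1*real n \<le> real ka + real kb" using Suc.prems unfolding inS_def by auto
    note P = probs[OF a c n S lt]
    have kb1: "kb \<ge> 1" using kb_pos[OF c(1) n Suc.prems] .
    define pb where "pb = pK_up_b a n ka kb"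
    define pa where "pa = pK_up_a a n ka kb"
    define ps where "ps = pK_swap a n ka kb"
    define V0 where "V0 = Vf a c1 n ka"
    define V1 where "V1 = Vf a c1 n (ka+1)"
    have eqs: "(\<Sum>u<Suc t. K_surv a n u (ka, kb)) = 1 + pb * A (ka, kb+1) + pa * A (ka+1, kb)
       + ps * A (ka+1, kb-1) + (1 - pb - pa - ps) * A (ka, kb)"
      unfolding sum.lessThan_Suc_shift A_def using False
      by (simp add: sum.distrib sum_distrib_left pb_def pa_def ps_def)
    have t1: "pb * A (ka, kb+1) \<le> pb * V0"
    proof (cases "kb = n")
      case True then show ?thesis by (simp add: pK_up_b_def pb_def)
    next
      case False
      then have "inS c1 n ka (kb+1)" using S unfolding inS_def by auto
      then have "A (ka, kb+1) \<le> V0" unfolding A_def V0_def by (rule Suc.IH)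
      then show ?thesis using P(1) unfolding pb_def[symmetric] by (rule mult_left_mono)
    qed
    have "inS c1 n (ka+1) kb" using S lt unfolding inS_def by auto
    then have "A (ka+1, kb) \<le> V1" unfolding A_def V1_def by (rule Suc.IH)
    then have t2: "pa * A (ka+1, kb) \<le> pa * V1" using P(2) unfolding pa_def[symmetric] by (rule mult_left_mono)
    have "inS c1 n (ka+1) (kb-1)" using S lt kb1 unfolding inS_def by (auto simp: of_nat_diff)
    then have "A (ka+1, kb-1) \<le> V1" unfolding A_def V1_def by (rule Suc.IH)
    then have t3: "ps * A (ka+1, kb-1) \<le> ps * V1" using P(3) unfolding ps_def[symmetric] by (rule mult_left_mono)
    have "A (ka, kb) \<le> V0" unfolding A_def V0_def by (rule Suc.IH[OF Suc.prems])
    moreover have "1 - pb - pa - ps \<ge> 0" using P(4) unfolding pb_def pa_def ps_def by simp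
    ultimately have t4: "(1 - pb - pa - ps) * A (ka, kb) \<le> (1 - pb - pa - ps) * V0"
      by (rule mult_left_mono)
    define D where "D = a + (2-a)*(2*c1-1)"
    have "(2-a)*(2*c1-1) > 0" using a c by (intro mult_pos_pos) auto
    then have D: "D > 0" using a unfolding D_def by simp
    have nk: "n - ka = Suc (n - (ka+1))" using lt by simp
    have r: "real (Suc (n - (ka+1))) = real n - real ka" using lt by (simp add: of_nat_diff)
    define cc where "cc = 2 * real n / (a * D)"
    have hs: "Hs (n-ka) = Hs (n-(ka+1)) + 1/(real n - real ka)"
    proof -
      have "Hs (n-ka) = Hs (n-(ka+1)) + 1 / real (n-ka)" using Hs_Suc[of "n-(ka+1)"] unfolding nk[symmetric] .
      moreover have "real (n-ka) = real n - real ka" using lt by (simp add: of_nat_diff)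
      ultimately show ?thesis by metis
    qed
    have v0: "V0 = cc * (Hs (n-(ka+1)) + 1/(real n - real ka))"
      unfolding V0_def Vf_def D_def[symmetric] cc_def hs ..
    have v1: "V1 = cc * Hs (n-(ka+1))" unfolding V1_def Vf_def D_def[symmetric] cc_def by simp
    have "V0 - V1 = cc / (real n - real ka)" unfolding v0 v1 by (simp add: algebra_simps)
    then have diff: "V0 - V1 = 2 * real n / (a * D * (real n - real ka))" unfolding cc_def by simp
    have rate: "pa + ps \<ge> a * D * (real n - real ka) / (2 * real n)"
      using P(5) unfolding pa_def ps_def D_def by simp
    have pos: "a * D * (real n - real ka) > 0" using a D lt by simp
    have "(pa + ps) * (V0 - V1) \<ge> 1"
    proof -
      have "(pa + ps) * (V0 - V1) \<ge> a * D * (real n - real ka) / (2 * real n) * (2 * real n / (a * D * (real n - real ka)))"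
        unfolding diff using rate pos n D a lt by (intro mult_right_mono) auto
      moreover have "a * D * (real n - real ka) / (2 * real n) * (2 * real n / (a * D * (real n - real ka))) = 1"
        using pos n D a lt by (simp add: field_simps)
      ultimately show ?thesis by linarith
    qed
    then have "1 + pb * V0 + pa * V1 + ps * V1 + (1 - pb - pa - ps) * V0 \<le> V0"
      by (simp add: algebra_simps)
    then show ?thesis unfolding eqs V0_def[symmetric] using t1 t2 t3 t4 by linarith
  qed
qed


theorem mainTheorem4:
  fixes a c1 :: real
  assumes "0 < a" and "a \<le> 1" and "1/2 < c1" and "c1 < 1"
  shows "\<exists>C::real. \<forall>n::nat. \<forall>ka kb::nat.
           n \<ge> 1 \<longrightarrow> ka \<le> n \<longrightarrow> kb \<le> n \<longrightarrow>
           real ka + real kb \<ge> 2 * c1 * real n \<longrightarrow>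
           K_expected_tau_a a n (ka, kb)
             \<le> ennreal (real n / (a * (2 * c1 - 1)) * ln ((2 * c1 - 1) * real n) + C * real n)"
proof -
  note a = assms(1,2) and c = assms(3,4)
  define e where "e = 2*c1 - 1"
  have e: "e > 0" "e < 1" using c unfolding e_def by auto
  define D where "D = a + (2-a)*e"
  have "(2-a)*e > 0" using a e by (intro mult_pos_pos) auto
  then have D: "D > 0" using a unfolding D_def by simp
  have De: "2 * e \<le> D"
  proof -
    have "D - 2*e = a * (1 - e)" unfolding D_def by (simp add: algebra_simps)
    moreover have "a * (1 - e) \<ge> 0" using a e by simp
    ultimately show ?thesis by simp
  qed
  have coef: "2 / (a * D) \<le> 1 / (a * e)"
    using De a e D by (simp add: divide_simps)
  have ae: "0 \<le> a * e" using a e by simp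
  define C where "C = (1 - ln e) / (a * e)"
  show ?thesis
  proof (intro exI[of _ C] allI impI)
    fix n ka kb :: nat
    assume n: "n \<ge> 1" and S: "ka \<le> n" "kb \<le> n" "real ka + real kb \<ge> 2 * c1 * real n"
    have inS: "inS c1 n ka kb" using S unfolding inS_def by auto
    have nn: "real n \<ge> 1" using n by simp
    have part: "(\<Sum>u<t. ennreal (K_surv a n u (ka, kb))) \<le> ennreal (Vf a c1 n ka)" for t
    proof -
      have "(\<Sum>u<t. ennreal (K_surv a n u (ka, kb))) = ennreal (\<Sum>u<t. K_surv a n u (ka, kb))"
        using surv_nonneg[OF a c n inS] by (intro sum_ennreal) auto
      also have "\<dots> \<le> ennreal (Vf a c1 n ka)"
        using partial_bound[OF a c n inS] by (intro ennreal_leI)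
      finally show ?thesis .
    qed
    have E: "K_expected_tau_a a n (ka, kb) \<le> ennreal (Vf a c1 n ka)"
      unfolding K_expected_tau_a_def by (intro suminf_le_const summableI part)
    have H: "Hs (n - ka) \<le> 1 + ln (real n)"
      using Hs_mono[of "n-ka" n] Hs_le[OF n] by simp
    have lnpos: "1 + ln (real n) \<ge> 0" using nn by simp
    have "Vf a c1 n ka = real n * (2 / (a * D)) * Hs (n - ka)"
      unfolding Vf_def D_def e_def by simp
    also have "\<dots> \<le> real n * (1 / (a * e)) * (1 + ln (real n))"
      using H coef Hs_nonneg lnpos nn mult_pos_pos[OF a(1) D] mult_pos_pos[OF a(1) e(1)] ae
      by (intro mult_mono mult_left_mono) (auto intro!: divide_nonneg_nonneg simp: a e)
    also have "\<dots> = real n / (a * (2 * c1 - 1)) * ln ((2 * c1 - 1) * real n) + C * real n"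
      unfolding C_def e_def[symmetric] using e nn a
      by (simp add: ln_mult field_simps)
    finally have "Vf a c1 n ka \<le> real n / (a * (2 * c1 - 1)) * ln ((2 * c1 - 1) * real n) + C * real n" .
    then show "K_expected_tau_a a n (ka, kb)
             \<le> ennreal (real n / (a * (2 * c1 - 1)) * ln ((2 * c1 - 1) * real n) + C * real n)"
      using E ennreal_leI order_trans by blast
  qed
qed

end
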